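(* Let $a\in\mathit{Act}$ and let $m$ be a closed monitor. (1) If $m$ is $\mathit{no}$-free then $\mathcal{E}_v\vdash\mathit{yes}+a.m=\mathit{yes}$. (2) If $m$ contains occurrences of both $\mathit{yes}$ and $\mathit{no}$, then $\mathcal{E}_v\vdash\mathit{yes}+a.m=\mathit{yes}+a.n$ for some $\mathit{yes}$-free closed monitor $n$. (3) If $m$ is $\mathit{yes}$-free then $\mathcal{E}_v\vdash\mathit{no}+a.m=\mathit{no}$. (4) If $m$ contains occurrences of both $\mathit{yes}$ and $\mathit{no}$, then $\mathcal{E}_v\vdash\mathit{no}+a.m=\mathit{no}+a.n$ for some $\mathit{no}$-free closed monitor $n$.
   Context: Monitors: terms $m,n ::= v \mid a.m \mid m+n \mid x$ over a nonempty action set $\mathit{Act}$ and variables $x$, verdicts $v::=\mathit{end}\mid\mathit{yes}\mid\mathit{no}$; closed monitors contain no variables. A monitor is $v$-free if it contains no occurrence of the verdict $v$. $\mathcal{E}\vdash m=n$ denotes derivability by the rules of equational logic (reflexivity, symmetry, transitivity, substitution, congruence for $a.\_$ and $+$). $\mathcal{E}_v$ consists of (A1) $x+y=y+x$; (A2) $x+(y+z)=(x+y)+z$; (A3) $x+x=x$; (A4) $x+\mathit{end}=x$; and, for each $a\in\mathit{Act}$, ($E_a$) $a.\mathit{end}=\mathit{end}$; ($Y_a$) $\mathit{yes}=\mathit{yes}+a.\mathit{yes}$; ($N_a$) $\mathit{no}=\mathit{no}+a.\mathit{no}$; ($D_a$) $a.(x+y)=a.x+a.y$. *)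

theory Defs
  imports Main
begin

datatype verdict = End | Yes | No

datatype 'act mon =
    Verd verdict
  | Pre 'act "'act mon"
  | Sum "'act mon" "'act mon"
  | Var nat

fun vars :: "'act mon \<Rightarrow> nat set" where
  "vars (Verd v) = {}"
| "vars (Pre a m) = vars m"
| "vars (Sum m n) = vars m \<union> vars n"
| "vars (Var x) = {x}"

definition closed :: "'act mon \<Rightarrow> bool" where
  "closed m \<longleftrightarrow> vars m = {}"

fun verdicts :: "'act mon \<Rightarrow> verdict set" where
  "verdicts (Verd v) = {v}"
| "verdicts (Pre a m) = verdicts m"
| "verdicts (Sum m n) = verdicts m \<union> verdicts n"
| "verdicts (Var x) = {}"

definition vfree :: "verdict \<Rightarrow> 'act mon \<Rightarrow> bool" where
  "vfree v m \<longleftrightarrow> v \<notin> verdicts m"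

fun subst :: "(nat \<Rightarrow> 'act mon) \<Rightarrow> 'act mon \<Rightarrow> 'act mon" where
  "subst \<sigma> (Verd v) = Verd v"
| "subst \<sigma> (Pre a m) = Pre a (subst \<sigma> m)"
| "subst \<sigma> (Sum m n) = Sum (subst \<sigma> m) (subst \<sigma> n)"
| "subst \<sigma> (Var x) = \<sigma> x"

text \<open>The axioms of E_v (variables x = Var 0, y = Var 1, z = Var 2).\<close>
inductive Ev_ax :: "'act mon \<Rightarrow> 'act mon \<Rightarrow> bool" where
  A1: "Ev_ax (Sum (Var 0) (Var 1)) (Sum (Var 1) (Var 0))"
| A2: "Ev_ax (Sum (Var 0) (Sum (Var 1) (Var 2))) (Sum (Sum (Var 0) (Var 1)) (Var 2))"
| A3: "Ev_ax (Sum (Var 0) (Var 0)) (Var 0)"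
| A4: "Ev_ax (Sum (Var 0) (Verd End)) (Var 0)"
| Ea: "Ev_ax (Pre a (Verd End)) (Verd End)"
| Ya: "Ev_ax (Verd Yes) (Sum (Verd Yes) (Pre a (Verd Yes)))"
| Na: "Ev_ax (Verd No) (Sum (Verd No) (Pre a (Verd No)))"
| Da: "Ev_ax (Pre a (Sum (Var 0) (Var 1))) (Sum (Pre a (Var 0)) (Pre a (Var 1)))"

inductive Ev_eq :: "'act mon \<Rightarrow> 'act mon \<Rightarrow> bool" where
  ax: "Ev_ax m n \<Longrightarrow> Ev_eq m n"
| refl: "Ev_eq m m"
| sym: "Ev_eq m n \<Longrightarrow> Ev_eq n m"
| trans: "Ev_eq m n \<Longrightarrow> Ev_eq n k \<Longrightarrow> Ev_eq m k"
| subst: "Ev_eq m n \<Longrightarrow> Ev_eq (subst \<sigma> m) (subst \<sigma> n)"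
| pre: "Ev_eq m n \<Longrightarrow> Ev_eq (Pre a m) (Pre a n)"
| sum: "Ev_eq m1 n1 \<Longrightarrow> Ev_eq m2 n2 \<Longrightarrow> Ev_eq (Sum m1 m2) (Sum n1 n2)"

end

theory Submission
  imports Defs
begin

declare Ev_eq.trans [trans]

lemma ax_inst: "Ev_ax l r \<Longrightarrow> Ev_eq (subst \<sigma> l) (subst \<sigma> r)"
  by (rule Ev_eq.subst[OF Ev_eq.ax])

lemma comm: "Ev_eq (Sum x y) (Sum y x)"
  using ax_inst[OF Ev_ax.A1, of "\<lambda>i. if i=0 then x else y"] by simp

lemma assoc: "Ev_eq (Sum x (Sum y z)) (Sum (Sum x y) z)"
  using ax_inst[OF Ev_ax.A2, of "\<lambda>i. if i=0 then x else if i=1 then y else z"] by simp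

lemma endr: "Ev_eq (Sum x (Verd End)) x"
  using ax_inst[OF Ev_ax.A4, of "\<lambda>i. x"] by simp

lemma preEnd: "Ev_eq (Pre a (Verd End)) (Verd End)"
  by (rule Ev_eq.ax[OF Ev_ax.Ea])

lemma dist: "Ev_eq (Pre a (Sum x y)) (Sum (Pre a x) (Pre a y))"
  using ax_inst[OF Ev_ax.Da, of "\<lambda>i. if i=0 then x else y"] by simp

lemma vax: "v \<in> {Yes,No} \<Longrightarrow> Ev_eq (Verd v) (Sum (Verd v) (Pre a (Verd v)))"
  using Ev_eq.ax[OF Ev_ax.Ya] Ev_eq.ax[OF Ev_ax.Na] by auto

lemma congL: "Ev_eq x x' \<Longrightarrow> Ev_eq (Sum x y) (Sum x' y)"
  by (rule Ev_eq.sum[OF _ Ev_eq.refl])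
lemma congR: "Ev_eq y y' \<Longrightarrow> Ev_eq (Sum x y) (Sum x y')"
  by (rule Ev_eq.sum[OF Ev_eq.refl])

lemma absorb:
  assumes "v \<in> {Yes,No}"
  shows "Ev_eq (Sum (Verd v) (Pre a x)) (Sum (Verd v) (Pre a (Sum (Verd v) x)))"
proof -
  have "Ev_eq (Sum (Verd v) (Pre a (Sum (Verd v) x))) (Sum (Verd v) (Sum (Pre a (Verd v)) (Pre a x)))"
    by (rule congR[OF dist])
  also have "Ev_eq \<dots> (Sum (Sum (Verd v) (Pre a (Verd v))) (Pre a x))" by (rule assoc)
  also have "Ev_eq \<dots> (Sum (Verd v) (Pre a x))" by (rule congL[OF Ev_eq.sym[OF vax[OF assms]]])
  finally show ?thesis by (rule Ev_eq.sym)
qed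

lemma P1:
  assumes "vars m = {}" "verdicts m \<subseteq> {v, End}" "v \<in> {Yes,No}"
  shows "Ev_eq (Sum (Verd v) (Pre a m)) (Verd v)"
  using assms
proof (induction m arbitrary: a)
  case (Verd u)
  then consider "u = v" | "u = End" by auto
  then show ?case
  proof cases
    case 1 then show ?thesis using Ev_eq.sym[OF vax[OF Verd(3)]] by simp
  next
    case 2
    have "Ev_eq (Sum (Verd v) (Pre a (Verd End))) (Sum (Verd v) (Verd End))"
      by (rule congR[OF preEnd])
    also have "Ev_eq \<dots> (Verd v)" by (rule endr)
    finally show ?thesis using 2 by simp
  qed
next
  case (Pre b m)
  have "Ev_eq (Sum (Verd v) (Pre a (Pre b m))) (Sum (Verd v) (Pre a (Sum (Verd v) (Pre b m))))"
    by (rule absorb[OF Pre(4)])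
  also have "Ev_eq \<dots> (Sum (Verd v) (Pre a (Verd v)))"
    using Pre by (intro congR Ev_eq.pre) auto
  also have "Ev_eq \<dots> (Verd v)" by (rule Ev_eq.sym[OF vax[OF Pre(4)]])
  finally show ?case .
next
  case (Sum m1 m2)
  have "Ev_eq (Sum (Verd v) (Pre a (Sum m1 m2))) (Sum (Verd v) (Sum (Pre a m1) (Pre a m2)))"
    by (rule congR[OF dist])
  also have "Ev_eq \<dots> (Sum (Sum (Verd v) (Pre a m1)) (Pre a m2))" by (rule assoc)
  also have "Ev_eq \<dots> (Sum (Verd v) (Pre a m2))" using Sum by (intro congL) auto
  also have "Ev_eq \<dots> (Verd v)" using Sum by auto
  finally show ?case .
next
  case (Var x) then show ?case by simp
qed

lemma P2:
  assumes "vars m = {}" "v \<in> {Yes,No}"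
  shows "\<exists>n. vars n = {} \<and> v \<notin> verdicts n \<and>
     Ev_eq (Sum (Verd v) (Pre a m)) (Sum (Verd v) (Pre a n))"
  using assms
proof (induction m arbitrary: a)
  case (Verd u)
  show ?case
  proof (cases "u = v")
    case True
    have "Ev_eq (Sum (Verd v) (Pre a (Verd v))) (Verd v)" by (rule Ev_eq.sym[OF vax[OF Verd(2)]])
    also have "Ev_eq \<dots> (Sum (Verd v) (Verd End))" by (rule Ev_eq.sym[OF endr])
    also have "Ev_eq \<dots> (Sum (Verd v) (Pre a (Verd End)))" by (rule congR[OF Ev_eq.sym[OF preEnd]])
    finally show ?thesis using True Verd(2) by (intro exI[of _ "Verd End"]) auto
  next
    case False
    then show ?thesis by (intro exI[of _ "Verd u"]) (auto intro: Ev_eq.refl)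
  qed
next
  case (Pre b m)
  obtain n' where n': "vars n' = {}" "v \<notin> verdicts n'"
     "Ev_eq (Sum (Verd v) (Pre b m)) (Sum (Verd v) (Pre b n'))" using Pre.IH[of b] Pre.prems by auto
  have "Ev_eq (Sum (Verd v) (Pre a (Pre b m))) (Sum (Verd v) (Pre a (Sum (Verd v) (Pre b m))))"
    by (rule absorb[OF Pre(3)])
  also have "Ev_eq \<dots> (Sum (Verd v) (Pre a (Sum (Verd v) (Pre b n'))))"
    using n'(3) by (rule congR[OF Ev_eq.pre])
  also have "Ev_eq \<dots> (Sum (Verd v) (Pre a (Pre b n')))" by (rule Ev_eq.sym[OF absorb[OF Pre(3)]])
  finally show ?case using n' by (intro exI[of _ "Pre b n'"]) auto
next
  case (Sum m1 m2)
  then obtain n1 n2 where n1: "vars n1 = {}" "v \<notin> verdicts n1"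
     "Ev_eq (Sum (Verd v) (Pre a m1)) (Sum (Verd v) (Pre a n1))"
    and n2: "vars n2 = {}" "v \<notin> verdicts n2"
     "Ev_eq (Sum (Verd v) (Pre a m2)) (Sum (Verd v) (Pre a n2))"
    by (metis Un_empty vars.simps(3))
  have "Ev_eq (Sum (Verd v) (Pre a (Sum m1 m2))) (Sum (Verd v) (Sum (Pre a m1) (Pre a m2)))"
    by (rule congR[OF dist])
  also have "Ev_eq \<dots> (Sum (Sum (Verd v) (Pre a m1)) (Pre a m2))" by (rule assoc)
  also have "Ev_eq \<dots> (Sum (Sum (Verd v) (Pre a n1)) (Pre a m2))" using n1 by (intro congL)
  also have "Ev_eq \<dots> (Sum (Verd v) (Sum (Pre a n1) (Pre a m2)))" by (rule Ev_eq.sym[OF assoc])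
  also have "Ev_eq \<dots> (Sum (Verd v) (Sum (Pre a m2) (Pre a n1)))" by (rule congR[OF comm])
  also have "Ev_eq \<dots> (Sum (Sum (Verd v) (Pre a m2)) (Pre a n1))" by (rule assoc)
  also have "Ev_eq \<dots> (Sum (Sum (Verd v) (Pre a n2)) (Pre a n1))" using n2 by (intro congL)
  also have "Ev_eq \<dots> (Sum (Verd v) (Sum (Pre a n2) (Pre a n1)))" by (rule Ev_eq.sym[OF assoc])
  also have "Ev_eq \<dots> (Sum (Verd v) (Sum (Pre a n1) (Pre a n2)))" by (rule congR[OF comm])
  also have "Ev_eq \<dots> (Sum (Verd v) (Pre a (Sum n1 n2)))" by (rule congR[OF Ev_eq.sym[OF dist]])
  finally show ?case using n1 n2 by (intro exI[of _ "Sum n1 n2"]) auto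
next
  case (Var x) then show ?case by simp
qed

lemma verd_cases: "verdicts m \<subseteq> {End, Yes, No}"
  using verdict.exhaust by blast

theorem mainTheorem5:
  fixes a :: 'act and m :: "'act mon"
  assumes "closed m"
  shows "(vfree No m \<longrightarrow> Ev_eq (Sum (Verd Yes) (Pre a m)) (Verd Yes))
    \<and> (Yes \<in> verdicts m \<and> No \<in> verdicts m \<longrightarrow>
         (\<exists>n. closed n \<and> vfree Yes n \<and>
              Ev_eq (Sum (Verd Yes) (Pre a m)) (Sum (Verd Yes) (Pre a n))))
    \<and> (vfree Yes m \<longrightarrow> Ev_eq (Sum (Verd No) (Pre a m)) (Verd No))
    \<and> (Yes \<in> verdicts m \<and> No \<in> verdicts m \<longrightarrow>
         (\<exists>n. closed n \<and> vfree No n \<and>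
              Ev_eq (Sum (Verd No) (Pre a m)) (Sum (Verd No) (Pre a n))))"
proof -
  have c: "vars m = {}" using assms closed_def by auto
  have "vfree No m \<Longrightarrow> verdicts m \<subseteq> {Yes, End}" using verd_cases[of m] vfree_def by blast
  moreover have "vfree Yes m \<Longrightarrow> verdicts m \<subseteq> {No, End}" using verd_cases[of m] vfree_def by blast
  ultimately show ?thesis
    using P1[OF c, of Yes a] P1[OF c, of No a] P2[OF c, of Yes a] P2[OF c, of No a]
    unfolding closed_def vfree_def by auto
qed

end
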